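(* Let $D$ be a non-commutative division ring with center $F$ and let $M$ be a maximal subgroup of $D^*$. If $M$ is abelian, then $M\cup\{0\}$ is a maximal subfield of $D$; that is, $M=K^*$ for some maximal subfield $K$ of $D$.
   Context: $D^*$ is the multiplicative group of $D$; maximal subgroup = proper subgroup maximal among proper subgroups. A maximal subfield of $D$ is a subfield not properly contained in another subfield. *)

theory Defs
  imports Main
begin

definition units_set :: "'a::division_ring set" where
  "units_set = {x. x \<noteq> 0}"

definition mult_subgroup :: "'a::division_ring set \<Rightarrow> bool" where
  "mult_subgroup M \<longleftrightarrow> M \<subseteq> units_set \<and> 1 \<in> M \<and>
     (\<forall>x\<in>M. \<forall>y\<in>M. x * y \<in> M) \<and> (\<forall>x\<in>M. inverse x \<in> M)"

definition maximal_mult_subgroup :: "'a::division_ring set \<Rightarrow> bool" where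
  "maximal_mult_subgroup M \<longleftrightarrow> mult_subgroup M \<and> M \<noteq> units_set \<and>
     (\<forall>H. mult_subgroup H \<and> M \<subseteq> H \<and> H \<noteq> units_set \<longrightarrow> H = M)"

definition subfield :: "'a::division_ring set \<Rightarrow> bool" where
  "subfield K \<longleftrightarrow> 0 \<in> K \<and> 1 \<in> K \<and>
     (\<forall>x\<in>K. \<forall>y\<in>K. x + y \<in> K \<and> x * y \<in> K \<and> x * y = y * x) \<and>
     (\<forall>x\<in>K. - x \<in> K \<and> inverse x \<in> K)"

definition maximal_subfield :: "'a::division_ring set \<Rightarrow> bool" where
  "maximal_subfield K \<longleftrightarrow> subfield K \<and> (\<forall>L. subfield L \<and> K \<subseteq> L \<longrightarrow> L = K)"

end

theory Submission
  imports Defs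
begin

definition cent :: "'a::division_ring set \<Rightarrow> 'a set" where
  "cent S = {x. \<forall>s\<in>S. x * s = s * x}"

lemma cent_inv:
  fixes x s :: "'a::division_ring"
  assumes "x * s = s * x"
  shows "inverse x * s = s * inverse x"
proof (cases "x = 0")
  case True then show ?thesis by simp
next
  case False
  have "inverse x * s = inverse x * (s * x) * inverse x"
    using False by (simp add: mult.assoc)
  also have "\<dots> = inverse x * (x * s) * inverse x" using assms by simp
  also have "\<dots> = s * inverse x" using False by (simp flip: mult.assoc)
  finally show ?thesis .
qed

lemma cent_closed:
  fixes S :: "'a::division_ring set"
  shows "0 \<in> cent S" "1 \<in> cent S"
    "x \<in> cent S \<Longrightarrow> y \<in> cent S \<Longrightarrow> x + y \<in> cent S"
    "x \<in> cent S \<Longrightarrow> y \<in> cent S \<Longrightarrow> x * y \<in> cent S"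
    "x \<in> cent S \<Longrightarrow> - x \<in> cent S"
    "x \<in> cent S \<Longrightarrow> inverse x \<in> cent S"
  unfolding cent_def
  by (auto simp: algebra_simps cent_inv) (metis mult.assoc)

theorem proposition2p2:
  fixes M :: "'a::division_ring set"
  assumes noncomm: "\<exists>a b :: 'a. a * b \<noteq> b * a"
    and max: "maximal_mult_subgroup M"
    and abelian: "\<forall>x\<in>M. \<forall>y\<in>M. x * y = y * x"
  shows "maximal_subfield (M \<union> {0})"
proof -
  have sg: "mult_subgroup M" and ne: "M \<noteq> units_set"
    and mx: "\<And>H. mult_subgroup H \<Longrightarrow> M \<subseteq> H \<Longrightarrow> H \<noteq> units_set \<Longrightarrow> H = M"
    using max unfolding maximal_mult_subgroup_def by blast+
  have M0: "0 \<notin> M" using sg unfolding mult_subgroup_def units_set_def by blast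
  have key: "L = M \<union> {0}" if L: "subfield L" "M \<subseteq> L" for L
  proof -
    let ?H = "L - {0}"
    have "mult_subgroup ?H"
      using L(1) unfolding mult_subgroup_def subfield_def units_set_def
      by (auto simp: nonzero_imp_inverse_nonzero)
    moreover have "?H \<noteq> units_set"
    proof
      assume h: "?H = units_set"
      have "\<forall>a b :: 'a. a * b = b * a"
      proof (intro allI)
        fix a b :: 'a
        show "a * b = b * a"
        proof (cases "a = 0 \<or> b = 0")
          case True then show ?thesis by auto
        next
          case False
          then have "a \<in> L" "b \<in> L" using h unfolding units_set_def by auto
          then show ?thesis using L(1) unfolding subfield_def by blast
        qed
      qed
      then show False using noncomm by blast
    qed
    moreover have "M \<subseteq> ?H" using L(2) M0 by blast
    ultimately have "?H = M" using mx by blast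
    moreover have "0 \<in> L" using L(1) unfolding subfield_def by blast
    ultimately show ?thesis by blast
  qed
  let ?K = "cent (cent M)"
  have MK: "M \<subseteq> ?K" unfolding cent_def by auto
  have MC: "M \<subseteq> cent M" using abelian unfolding cent_def by auto
  have KC: "?K \<subseteq> cent M" using MC unfolding cent_def by auto
  have sK: "subfield ?K"
    unfolding subfield_def
  proof (intro conjI ballI)
    fix x y assume x: "x \<in> ?K" and y: "y \<in> ?K"
    show "x + y \<in> ?K" using x y by (rule cent_closed(3))
    show "x * y \<in> ?K" using x y by (rule cent_closed(4))
    show "x * y = y * x" using x y KC unfolding cent_def by auto
  next
    fix x assume x: "x \<in> ?K"
    show "- x \<in> ?K" using x by (rule cent_closed(5))
    show "inverse x \<in> ?K" using x by (rule cent_closed(6))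
  qed (auto intro: cent_closed)
  have eq: "?K = M \<union> {0}" using key[OF sK MK] .
  show ?thesis
    unfolding maximal_subfield_def
  proof (intro conjI allI impI)
    show "subfield (M \<union> {0})" using sK eq by simp
  next
    fix L assume "subfield L \<and> M \<union> {0} \<subseteq> L"
    then show "L = M \<union> {0}" using key by blast
  qed
qed

end
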